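(* Let $R$ be an integral domain and $p,q\in R$. The matrix $\begin{pmatrix} p & q\\ 0 & 0\end{pmatrix}$ is a product of idempotent $2\times 2$ matrices over $R$ if and only if $\begin{pmatrix} q & p\\ 0 & 0\end{pmatrix}$ is a product of idempotent $2\times 2$ matrices over $R$.
   Context: A matrix $E$ over $R$ is idempotent if $E^2=E$. "Product of idempotent matrices" means a finite product of idempotent $2\times2$ matrices with entries in $R$. *)

theory Defs
  imports "HOL-Analysis.Analysis"
begin

definition idempotent_mat :: "'a::comm_ring_1 ^ 2 ^ 2 \<Rightarrow> bool" where
  "idempotent_mat E \<longleftrightarrow> E ** E = E"

text \<open>A finite product of idempotent 2x2 matrices over the ring.\<close>
definition prod_idempotents :: "'a::comm_ring_1 ^ 2 ^ 2 \<Rightarrow> bool" where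
  "prod_idempotents A \<longleftrightarrow>
     (\<exists>Es :: ('a ^ 2 ^ 2) list. (\<forall>E \<in> set Es. idempotent_mat E) \<and>
        A = foldr (**) Es (mat 1))"

definition mat2 :: "'a::zero \<Rightarrow> 'a \<Rightarrow> 'a \<Rightarrow> 'a \<Rightarrow> 'a ^ 2 ^ 2" where
  "mat2 a b c d = (\<chi> i j. if i = 1 then (if j = 1 then a else b)
                              else (if j = 1 then c else d))"

end

theory Submission
  imports Defs
begin

definition swp :: "'a::comm_ring_1 ^ 2 ^ 2" where "swp = mat2 0 1 1 0"

lemma swp_sq: "(swp :: 'a::comm_ring_1 ^ 2 ^ 2) ** swp = mat 1"
  by (simp add: swp_def mat2_def vec_eq_iff matrix_matrix_mult_def sum_2 forall_2 mat_def)

lemma foldr_conj: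
  "foldr (**) (map (\<lambda>E. swp ** E ** swp) Es) (mat 1) = swp ** foldr (**) Es (mat 1) ** (swp :: 'a::comm_ring_1 ^ 2 ^ 2)"
proof (induction Es)
  case Nil then show ?case by (simp add: swp_sq)
next
  case (Cons E Es)
  have "foldr (**) (map (\<lambda>E. swp ** E ** swp) (E # Es)) (mat 1)
     = (swp ** E ** swp) ** (swp ** foldr (**) Es (mat 1) ** swp)" using Cons by simp
  also have "\<dots> = swp ** E ** (swp ** swp) ** foldr (**) Es (mat 1) ** swp"
    by (simp add: matrix_mul_assoc)
  also have "\<dots> = swp ** foldr (**) (E # Es) (mat 1) ** swp"
    by (simp add: swp_sq matrix_mul_assoc)
  finally show ?case .
qed

lemma conj_idem: "idempotent_mat E \<Longrightarrow> idempotent_mat (swp ** E ** (swp :: 'a::comm_ring_1 ^ 2 ^ 2))"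
proof -
  assume "idempotent_mat E"
  then have e: "E ** E = E" by (simp add: idempotent_mat_def)
  have "(swp ** E ** swp) ** (swp ** E ** swp) = swp ** E ** (swp ** swp) ** E ** swp"
    by (simp add: matrix_mul_assoc)
  also have "\<dots> = swp ** (E ** E) ** swp" by (simp add: swp_sq matrix_mul_assoc)
  also have "\<dots> = swp ** E ** swp" using e by simp
  finally show ?thesis by (simp add: idempotent_mat_def)
qed

lemma key: "mat2 1 1 0 0 ** (swp ** mat2 p q 0 0 ** swp) = mat2 q p 0 (0::'a::comm_ring_1)"
  by (simp add: swp_def mat2_def vec_eq_iff matrix_matrix_mult_def sum_2 forall_2)

lemma U_idem: "idempotent_mat (mat2 1 1 0 (0::'a::comm_ring_1))"
  by (simp add: idempotent_mat_def mat2_def vec_eq_iff matrix_matrix_mult_def sum_2 forall_2)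

lemma one_dir:
  fixes p q :: "'a::comm_ring_1"
  assumes "prod_idempotents (mat2 p q 0 0)"
  shows "prod_idempotents (mat2 q p 0 0)"
proof -
  obtain Es where es: "\<forall>E\<in>set Es. idempotent_mat E" and A: "mat2 p q 0 0 = foldr (**) Es (mat 1)"
    using assms unfolding prod_idempotents_def by blast
  let ?Fs = "mat2 1 1 0 0 # map (\<lambda>E. swp ** E ** swp) Es"
  have "\<forall>E\<in>set ?Fs. idempotent_mat E" using es U_idem conj_idem by auto
  moreover have "mat2 q p 0 0 = foldr (**) ?Fs (mat 1)"
    using key[of p q] A foldr_conj[of Es] by simp
  ultimately show ?thesis unfolding prod_idempotents_def by blast
qed

theorem lemma3p1:
  fixes p q :: "'a::idom"
  shows "prod_idempotents (mat2 p q 0 0) \<longleftrightarrow> prod_idempotents (mat2 q p 0 0)"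
  using one_dir by blast

end
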